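(* Let $n\ge 2$ be an integer, let $\lambda_n:=2^n/(2^n-1)$, and consider $\mathbb{R}^{2n+1}$ with points written as $(x_1,x_2,x_3,y_1,\dots,y_{n-1},z_1,\dots,z_{n-1})$. Let $$K_n:=\Big\{(x_1,x_2,x_3,y_1,\dots,y_{n-1},z_1,\dots,z_{n-1})\;\Big|\; x_3^2\ge y_1^2+z_1^2,\ x_3\ge 0,\ x_3y_i\ge y_{i+1}^2\ (i=1,\dots,n-2),\ x_3y_{n-1}\ge x_1^2,\ x_3z_i\ge z_{i+1}^2\ (i=1,\dots,n-2),\ x_3z_{n-1}\ge x_2^2\Big\},$$ a closed convex cone, and let $K_n^\circ$ be its polar cone. Let $u_1,u_2\ge 0$ be such that $v:=(u_1,u_2,-1,0,\dots,0)$ lies in the boundary of $K_n^\circ$. Then $$N_{K_n^\circ}(v)=\mathrm{cone}(w)=\{\alpha w:\alpha\ge 0\},$$ where $w:=\big(u_1^{\lambda_n/2^n},\,u_2^{\lambda_n/2^n},\,1,\,u_1^{\lambda_n/2^1},\dots,u_1^{\lambda_n/2^{n-1}},\,u_2^{\lambda_n/2^1},\dots,u_2^{\lambda_n/2^{n-1}}\big)$.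
   Context: $\mathbb{R}^{2n+1}$ carries the standard Euclidean inner product. The polar cone of a cone $C$ is $C^\circ=\{v:\langle v,z\rangle\le 0\ \forall z\in C\}$. For a closed convex set $C$ and $\bar z\in C$, the normal cone is $N_C(\bar z)=\{v:\langle v,z-\bar z\rangle\le 0\ \forall z\in C\}$. *)

theory Defs
  imports Complex_Main
begin

text \<open>Points of R^(2n+1) are represented as functions nat => real that vanish at all
indices >= 2n+1. Coordinates (x1,x2,x3,y1..y(n-1),z1..z(n-1)) are stored at indices
0,1,2, 2+i (for y_i), n+1+i (for z_i).\<close>

definition Rsp :: "nat \<Rightarrow> (nat \<Rightarrow> real) set" where
  "Rsp n = {x. \<forall>i\<ge>2*n+1. x i = 0}"

definition ip :: "nat \<Rightarrow> (nat \<Rightarrow> real) \<Rightarrow> (nat \<Rightarrow> real) \<Rightarrow> real" where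
  "ip n a b = (\<Sum>i<2*n+1. a i * b i)"

definition edist :: "nat \<Rightarrow> (nat \<Rightarrow> real) \<Rightarrow> (nat \<Rightarrow> real) \<Rightarrow> real" where
  "edist n a b = sqrt (\<Sum>i<2*n+1. (a i - b i)^2)"

definition polar :: "nat \<Rightarrow> (nat \<Rightarrow> real) set \<Rightarrow> (nat \<Rightarrow> real) set" where
  "polar n C = {v \<in> Rsp n. \<forall>z\<in>C. ip n v z \<le> 0}"

definition normal_cone :: "nat \<Rightarrow> (nat \<Rightarrow> real) set \<Rightarrow> (nat \<Rightarrow> real) \<Rightarrow> (nat \<Rightarrow> real) set" where
  "normal_cone n C zb = {v \<in> Rsp n. \<forall>z\<in>C. ip n v (\<lambda>i. z i - zb i) \<le> 0}"

definition bdry :: "nat \<Rightarrow> (nat \<Rightarrow> real) set \<Rightarrow> (nat \<Rightarrow> real) set" where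
  "bdry n S = {x \<in> Rsp n. \<forall>e>0. (\<exists>y\<in>S. edist n x y < e) \<and>
                                   (\<exists>y\<in>Rsp n - S. edist n x y < e)}"

definition Kn :: "nat \<Rightarrow> (nat \<Rightarrow> real) set" where
  "Kn n = {p \<in> Rsp n.
     (let x1 = p 0; x2 = p 1; x3 = p 2; y = (\<lambda>i. p (2+i)); z = (\<lambda>i. p (n+1+i)) in
       x3^2 \<ge> (y 1)^2 + (z 1)^2 \<and> x3 \<ge> 0 \<and>
       (\<forall>i\<in>{1..n-2}. x3 * y i \<ge> (y (i+1))^2) \<and> x3 * y (n-1) \<ge> x1^2 \<and>
       (\<forall>i\<in>{1..n-2}. x3 * z i \<ge> (z (i+1))^2) \<and> x3 * z (n-1) \<ge> x2^2)}"

definition lam :: "nat \<Rightarrow> real" where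
  "lam n = 2^n / (2^n - 1)"

definition vpt :: "real \<Rightarrow> real \<Rightarrow> nat \<Rightarrow> real" where
  "vpt u1 u2 = (\<lambda>i. if i = 0 then u1 else if i = 1 then u2 else if i = 2 then -1 else 0)"

definition wpt :: "nat \<Rightarrow> real \<Rightarrow> real \<Rightarrow> nat \<Rightarrow> real" where
  "wpt n u1 u2 = (\<lambda>i.
     if i = 0 then u1 powr (lam n / 2^n)
     else if i = 1 then u2 powr (lam n / 2^n)
     else if i = 2 then 1
     else if 3 \<le> i \<and> i \<le> n+1 then u1 powr (lam n / 2^(i-2))
     else if n+2 \<le> i \<and> i \<le> 2*n then u2 powr (lam n / 2^(i-(n+1)))
     else 0)"

end

theory Submission
  imports Defs
begin


definition dl :: "nat \<Rightarrow> nat \<Rightarrow> real" where "dl j i = (if i = j then 1 else 0)"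

lemma ip_comm: "ip n a b = ip n b a"
  unfolding ip_def by (simp add: mult.commute)

lemma ip_dl3:
  assumes "j1 < 2*n+1" "j2 < 2*n+1" "j3 < 2*n+1"
  shows "ip n w (\<lambda>i. a * dl j1 i + b * dl j2 i + c * dl j3 i) = a * w j1 + b * w j2 + c * w j3"
proof -
  have "ip n w (\<lambda>i. a * dl j1 i + b * dl j2 i + c * dl j3 i)
     = (\<Sum>i<2*n+1. a * (w i * dl j1 i)) + (\<Sum>i<2*n+1. b * (w i * dl j2 i)) + (\<Sum>i<2*n+1. c * (w i * dl j3 i))"
    unfolding ip_def by (simp add: algebra_simps sum.distrib)
  also have "\<dots> = a * w j1 + b * w j2 + c * w j3"
    using assms by (simp add: dl_def sum_distrib_left[symmetric] if_distrib cong: if_cong)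
  finally show ?thesis .
qed

lemma ip_diff: "ip n a (\<lambda>i. b i - c i) = ip n a b - ip n a c"
  unfolding ip_def by (simp add: algebra_simps sum_subtractf)

lemma ip_scale: "ip n (\<lambda>i. x * a i) b = x * ip n a b"
  unfolding ip_def by (simp add: algebra_simps sum_distrib_left)

lemma ip_scale2: "ip n a (\<lambda>i. x * b i) = x * ip n a b"
  unfolding ip_def by (simp add: algebra_simps sum_distrib_left)

lemma Rsp_dl3:
  assumes "j1 < 2*n+1" "j2 < 2*n+1" "j3 < 2*n+1"
  shows "(\<lambda>i. a * dl j1 i + b * dl j2 i + c * dl j3 i) \<in> Rsp n"
  using assms unfolding Rsp_def dl_def by auto

lemma vpt_dl: "vpt u1 u2 = (\<lambda>i. u1 * dl 0 i + u2 * dl 1 i + (-1) * dl 2 i)"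
  unfolding vpt_def dl_def by auto

definition chain :: "real \<Rightarrow> (nat \<Rightarrow> real) \<Rightarrow> real \<Rightarrow> nat \<Rightarrow> bool" where
  "chain c y x m = ((\<forall>i\<in>{1..m-1}. c * y i \<ge> (y (i+1))^2) \<and> c * y m \<ge> x^2)"

definition KC :: "nat \<Rightarrow> real \<Rightarrow> real \<Rightarrow> real \<Rightarrow> (nat \<Rightarrow> real) \<Rightarrow> (nat \<Rightarrow> real) \<Rightarrow> bool" where
  "KC n x1 x2 x3 y z = (x3^2 \<ge> (y 1)^2 + (z 1)^2 \<and> x3 \<ge> 0 \<and> chain x3 y x1 (n-1) \<and> chain x3 z x2 (n-1))"

lemma Kn_iff: "p \<in> Kn n \<longleftrightarrow> p \<in> Rsp n \<and> KC n (p 0) (p 1) (p 2) (\<lambda>i. p (2+i)) (\<lambda>i. p (n+1+i))"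
proof -
  have e: "n - 2 = n - 1 - 1" by simp
  show ?thesis unfolding Kn_def KC_def chain_def Let_def e by auto
qed

lemma chain_bound:
  assumes c: "c \<ge> 0" and y1: "\<bar>y 1\<bar> \<le> c" and ch: "chain c y x m" and m: "m \<ge> 1"
  shows "(\<forall>i\<in>{1..m}. \<bar>y i\<bar> \<le> c) \<and> \<bar>x\<bar> \<le> c"
proof -
  have step: "\<bar>y (i+1)\<bar> \<le> c" if "i \<in> {1..m-1}" "\<bar>y i\<bar> \<le> c" for i
  proof -
    have "(y (i+1))^2 \<le> c * y i" using ch that unfolding chain_def by auto
    also have "\<dots> \<le> c * c" using that c by (metis abs_le_D1 mult_left_mono)
    finally have "(y (i+1))^2 \<le> c^2" by (simp add: power2_eq_square)
    then show ?thesis using c by (metis abs_le_square_iff abs_of_nonneg)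
  qed
  have all: "\<forall>i. 1 \<le> i \<longrightarrow> i \<le> m \<longrightarrow> \<bar>y i\<bar> \<le> c"
  proof
    fix i show "1 \<le> i \<longrightarrow> i \<le> m \<longrightarrow> \<bar>y i\<bar> \<le> c"
    proof (induction i)
      case 0 then show ?case by simp
    next
      case (Suc i)
      show ?case
      proof (cases "i = 0")
        case True then show ?thesis using y1 by simp
      next
        case False
        then show ?thesis using Suc step[of i] by auto
      qed
    qed
  qed
  have "x^2 \<le> c * y m" using ch unfolding chain_def by auto
  also have "\<dots> \<le> c * c" using all m c by (metis abs_le_D1 mult_left_mono order_refl)
  finally have "x^2 \<le> c^2" by (simp add: power2_eq_square)
  then have "\<bar>x\<bar> \<le> c" using c by (metis abs_le_square_iff abs_of_nonneg)
  then show ?thesis using all by auto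
qed

lemma chain_nonneg:
  assumes c: "c \<ge> 0" and ch: "chain c y x m" and b: "\<forall>i\<in>{1..m}. \<bar>y i\<bar> \<le> c"
  shows "\<forall>i\<in>{1..m}. y i \<ge> 0"
proof
  fix i assume i: "i \<in> {1..m}"
  show "y i \<ge> 0"
  proof (cases "c = 0")
    case True then show ?thesis using b i by fastforce
  next
    case False
    then have cp: "c > 0" using c by simp
    have "c * y i \<ge> 0"
    proof (cases "i = m")
      case True
      then show ?thesis using ch unfolding chain_def by (metis order_trans zero_le_power2)
    next
      case False
      then have "i \<in> {1..m-1}" using i by auto
      then show ?thesis using ch unfolding chain_def by (metis order_trans zero_le_power2)
    qed
    then show ?thesis using cp by (simp add: zero_le_mult_iff)
  qed
qed

lemma chain_scale:
  assumes c: "c > 0" and ch: "chain c y x m"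
  shows "chain 1 (\<lambda>i. y i / c) (x / c) m"
proof -
  have k: "(b / c)^2 \<le> a / c" if "b^2 \<le> c * a" for a b
  proof -
    have "(b/c)^2 = b^2 / c^2" by (simp add: power_divide)
    also have "\<dots> \<le> (c * a) / c^2" using that c by (simp add: divide_right_mono)
    also have "\<dots> = a / c" using c by (simp add: power2_eq_square)
    finally show ?thesis .
  qed
  show ?thesis using ch k unfolding chain_def by auto
qed

lemma chain1_step:
  assumes ch: "chain 1 y x m" and j: "j \<in> {1..m-1}"
  shows "(y (j+1))^(2^j) \<le> (y j)^(2^(j-1))"
proof -
  have "(y (j+1))^2 \<le> y j" using ch j unfolding chain_def by auto
  then have "((y (j+1))^2)^(2^(j-1)) \<le> (y j)^(2^(j-1))" by (simp add: power_mono)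
  moreover have "((y (j+1))^2)^(2^(j-1)) = (y (j+1))^(2^j)"
  proof -
    have "2 * 2^(j-1) = (2::nat)^j" using j by (cases j) auto
    then show ?thesis by (metis power_mult)
  qed
  ultimately show ?thesis by simp
qed

lemma chain1_mono:
  assumes ch: "chain 1 y x m" and m: "m \<ge> 1"
  shows "\<forall>j\<in>{1..m}. (y j)^(2^(j-1)) \<le> y 1"
proof -
  have "\<forall>j. 1 \<le> j \<longrightarrow> j \<le> m \<longrightarrow> (y j)^(2^(j-1)) \<le> y 1"
  proof
    fix j show "1 \<le> j \<longrightarrow> j \<le> m \<longrightarrow> (y j)^(2^(j-1)) \<le> y 1"
    proof (induction j)
      case 0 then show ?case by simp
    next
      case (Suc j)
      show ?case
      proof (cases "j = 0")
        case True then show ?thesis by simp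
      next
        case False
        then show ?thesis using Suc chain1_step[OF ch, of j] by fastforce
      qed
    qed
  qed
  then show ?thesis by auto
qed

lemma chain1_low:
  assumes ch: "chain 1 y x m" and m: "m \<ge> 1"
  shows "\<forall>j\<in>{1..m}. x^(2^m) \<le> (y j)^(2^(j-1))"
proof
  fix j assume j: "j \<in> {1..m}"
  have base: "x^(2^m) \<le> (y m)^(2^(m-1))"
  proof -
    have "x^2 \<le> y m" using ch unfolding chain_def by auto
    then have "(x^2)^(2^(m-1)) \<le> (y m)^(2^(m-1))" by (simp add: power_mono)
    moreover have "(x^2)^(2^(m-1)) = x^(2^m)"
    proof -
      have "2 * 2^(m-1) = (2::nat)^m" using m by (cases m) auto
      then show ?thesis by (metis power_mult)
    qed
    ultimately show ?thesis by simp
  qed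
  have "j \<le> m" "1 \<le> j" using j by auto
  then show "x^(2^m) \<le> (y j)^(2^(j-1))"
  proof (induction j rule: inc_induct)
    case base then show ?case using \<open>x^(2^m) \<le> (y m)^(2^(m-1))\<close> by simp
  next
    case (step k)
    have "x^(2^m) \<le> (y (Suc k))^(2^(Suc k - 1))" using step by simp
    also have "\<dots> \<le> (y k)^(2^(k-1))" using chain1_step[OF ch, of k] step by simp
    finally show ?case .
  qed
qed



lemma young_sum:
  fixes c s :: real
  shows "s^N + (real N - 1) * c^N - real N * c^(N-1) * s
       = (\<Sum>k<N. c^(N - Suc k) * ((s - c) * (s^k - c^k)))"
proof -
  have A: "s^N - c^N = (s - c) * (\<Sum>k<N. c^(N - Suc k) * s^k)" by (rule power_diff_sumr2)
  have B: "(\<Sum>k<N. c^(N - Suc k) * ((s - c) * (s^k - c^k)))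
      = (s - c) * (\<Sum>k<N. c^(N - Suc k) * s^k) - (s - c) * (\<Sum>k<N. c^(N - Suc k) * c^k)"
  proof -
    have "(\<Sum>k<N. c^(N - Suc k) * ((s - c) * (s^k - c^k)))
       = (\<Sum>k<N. (s - c) * (c^(N - Suc k) * s^k) - (s - c) * (c^(N - Suc k) * c^k))"
      by (intro sum.cong refl) (simp add: right_diff_distrib mult.left_commute)
    also have "\<dots> = (s - c) * (\<Sum>k<N. c^(N - Suc k) * s^k) - (s - c) * (\<Sum>k<N. c^(N - Suc k) * c^k)"
      by (simp add: sum_subtractf sum_distrib_left)
    finally show ?thesis .
  qed
  have C: "(\<Sum>k<N. c^(N - Suc k) * c^k) = real N * c^(N-1)"
  proof -
    have "\<And>k. k < N \<Longrightarrow> c^(N - Suc k) * c^k = c^(N-1)"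
      by (simp add: power_add[symmetric])
    then have "(\<Sum>k<N. c^(N - Suc k) * c^k) = (\<Sum>k<N. c^(N-1))" by (intro sum.cong) auto
    then show ?thesis by simp
  qed
  have D: "s^N + (real N - 1) * c^N - real N * c^(N-1) * s = (s^N - c^N) - (s - c) * (real N * c^(N-1))"
  proof (cases N)
    case 0 then show ?thesis by simp
  next
    case (Suc m)
    have "c^N = c * c^m" using Suc by simp
    then show ?thesis using Suc by (simp add: algebra_simps)
  qed
  show ?thesis unfolding B C D A by simp
qed

lemma term_nonneg:
  fixes c s :: real
  assumes "c \<ge> 0" "s \<ge> 0"
  shows "(s - c) * (s^k - c^k) \<ge> 0"
proof (cases "s \<ge> c")
  case True
  then have "s^k \<ge> c^k" using assms by (simp add: power_mono)
  then show ?thesis using True by simp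
next
  case False
  then have "s^k \<le> c^k" using assms by (simp add: power_mono)
  then show ?thesis using False by (simp add: mult_nonpos_nonpos)
qed

lemma young:
  fixes c s :: real
  assumes "c \<ge> 0" "s \<ge> 0"
  shows "real N * c^(N-1) * s \<le> s^N + (real N - 1) * c^N"
proof -
  have "(\<Sum>k<N. c^(N - Suc k) * ((s - c) * (s^k - c^k))) \<ge> 0"
    using assms term_nonneg by (intro sum_nonneg) (simp add: mult_nonneg_nonneg)
  then show ?thesis using young_sum[of s N c] by linarith
qed

lemma young_eq:
  fixes c s :: real
  assumes "c \<ge> 0" "s \<ge> 0" "N \<ge> 2"
    and eq: "real N * c^(N-1) * s = s^N + (real N - 1) * c^N"
  shows "s = c"
proof (rule ccontr)
  assume ne: "s \<noteq> c"
  have pos: "(s - c) * (s^(N-1) - c^(N-1)) > 0"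
  proof (cases "s > c")
    case True
    then have "s^(N-1) > c^(N-1)" using assms by (intro power_strict_mono) auto
    then show ?thesis using True by simp
  next
    case False
    then have "s < c" using ne by simp
    then have "s^(N-1) < c^(N-1)" using assms by (intro power_strict_mono) auto
    then show ?thesis using \<open>s < c\<close> by (simp add: mult_neg_neg)
  qed
  have "c^(N - Suc (N-1)) * ((s - c) * (s^(N-1) - c^(N-1)))
        \<le> (\<Sum>k<N. c^(N - Suc k) * ((s - c) * (s^k - c^k)))"
    using assms term_nonneg by (intro member_le_sum) (auto simp: mult_nonneg_nonneg)
  moreover have "c^(N - Suc (N-1)) = 1" using assms by simp
  ultimately have "(\<Sum>k<N. c^(N - Suc k) * ((s - c) * (s^k - c^k))) > 0" using pos by simp
  then show False using young_sum[of s N c] eq by linarith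
qed



lemma K_KC: "p \<in> Kn n \<Longrightarrow> KC n (p 0) (p 1) (p 2) (\<lambda>i. p (2+i)) (\<lambda>i. p (n+1+i))"
  using Kn_iff by blast

lemma K_Rsp: "p \<in> Kn n \<Longrightarrow> p \<in> Rsp n"
  using Kn_iff by blast

lemma sq_le_abs: "(a::real)^2 \<le> c^2 \<Longrightarrow> c \<ge> 0 \<Longrightarrow> \<bar>a\<bar> \<le> c"
  by (metis abs_le_square_iff abs_of_nonneg)

lemma K_bounds:
  assumes p: "p \<in> Kn n" and n: "n \<ge> 2"
  shows "p 2 \<ge> 0 \<and> (\<forall>i\<in>{1..n-1}. \<bar>p (2+i)\<bar> \<le> p 2 \<and> p (2+i) \<ge> 0 \<and> \<bar>p (n+1+i)\<bar> \<le> p 2 \<and> p (n+1+i) \<ge> 0)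
     \<and> \<bar>p 0\<bar> \<le> p 2 \<and> \<bar>p 1\<bar> \<le> p 2"
proof -
  note kc = K_KC[OF p, unfolded KC_def]
  have c: "p 2 \<ge> 0" using kc by simp
  have h: "(p (2+1))^2 + (p (n+1+1))^2 \<le> (p 2)^2" using kc by simp
  have y1: "\<bar>p (2+1)\<bar> \<le> p 2"
    using h c zero_le_power2[of "p (n+1+1)"] by (intro sq_le_abs) linarith+
  have z1: "\<bar>p (n+1+1)\<bar> \<le> p 2"
    using h c zero_le_power2[of "p (2+1)"] by (intro sq_le_abs) linarith+
  have m: "n - 1 \<ge> 1" using n by simp
  have by_: "(\<forall>i\<in>{1..n-1}. \<bar>p (2+i)\<bar> \<le> p 2) \<and> \<bar>p 0\<bar> \<le> p 2"
    using chain_bound[of "p 2" "\<lambda>i. p (2+i)" "p 0" "n-1"] kc c y1 m by auto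
  have bz: "(\<forall>i\<in>{1..n-1}. \<bar>p (n+1+i)\<bar> \<le> p 2) \<and> \<bar>p 1\<bar> \<le> p 2"
    using chain_bound[of "p 2" "\<lambda>i. p (n+1+i)" "p 1" "n-1"] kc c z1 m by auto
  have ny: "\<forall>i\<in>{1..n-1}. p (2+i) \<ge> 0"
    using chain_nonneg[of "p 2" "\<lambda>i. p (2+i)" "p 0" "n-1"] kc c by_ by auto
  have nz: "\<forall>i\<in>{1..n-1}. p (n+1+i) \<ge> 0"
    using chain_nonneg[of "p 2" "\<lambda>i. p (n+1+i)" "p 1" "n-1"] kc c bz by auto
  show ?thesis using c by_ bz ny nz by auto
qed

lemma K_abs:
  assumes p: "p \<in> Kn n" and n: "n \<ge> 2"
  shows "\<bar>p j\<bar> \<le> p 2"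
proof -
  note b = K_bounds[OF p n]
  have R: "p \<in> Rsp n" using K_Rsp[OF p] .
  consider "j = 0" | "j = 1" | "j = 2" | "3 \<le> j \<and> j \<le> n+1" | "n+2 \<le> j \<and> j \<le> 2*n" | "j \<ge> 2*n+1"
    by linarith
  then show ?thesis
  proof cases
    case 4
    then have "j - 2 \<in> {1..n-1}" "2 + (j - 2) = j" by auto
    then show ?thesis using b by metis
  next
    case 5
    then have "j - (n+1) \<in> {1..n-1}" "n + 1 + (j - (n+1)) = j" by auto
    then show ?thesis using b by metis
  next
    case 6
    then show ?thesis using R b unfolding Rsp_def by auto
  qed (use b in auto)
qed

lemma chain_pow_bound:
  assumes ch: "chain 1 y x m" and m: "m \<ge> 1"
  shows "\<bar>x\<bar>^(2^(m+1)) \<le> (y 1)^2"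
proof -
  have "1 \<in> {1..m}" using m by simp
  then have a: "x^(2^m) \<le> y 1" using chain1_low[OF ch m] by fastforce
  have ev: "even ((2::nat)^m)" using m by simp
  have b: "x^(2^m) \<ge> 0" using ev by (simp add: zero_le_even_power)
  have "\<bar>x\<bar>^(2^(m+1)) = (\<bar>x\<bar>^(2^m))^2" by (simp add: power_mult[symmetric] mult.commute)
  also have "\<bar>x\<bar>^(2^m) = x^(2^m)" using ev by (simp add: power_even_abs)
  finally have e: "\<bar>x\<bar>^(2^(m+1)) = (x^(2^m))^2" .
  show ?thesis unfolding e using a b by (simp add: power_mono)
qed

lemma K_norm:
  assumes p: "p \<in> Kn n" and n: "n \<ge> 2" and pos: "p 2 > 0"
  shows "chain 1 (\<lambda>i. p (2+i) / p 2) (p 0 / p 2) (n-1)"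
    and "chain 1 (\<lambda>i. p (n+1+i) / p 2) (p 1 / p 2) (n-1)"
    and "(p 3 / p 2)^2 + (p (n+2) / p 2)^2 \<le> 1"
proof -
  note kc = K_KC[OF p, unfolded KC_def]
  show "chain 1 (\<lambda>i. p (2+i) / p 2) (p 0 / p 2) (n-1)"
    using chain_scale[OF pos, of "\<lambda>i. p (2+i)"] kc by auto
  show "chain 1 (\<lambda>i. p (n+1+i) / p 2) (p 1 / p 2) (n-1)"
    using chain_scale[OF pos, of "\<lambda>i. p (n+1+i)"] kc by auto
  have "(p 3)^2 + (p (n+2))^2 \<le> (p 2)^2" using kc by (simp add: numeral_3_eq_3)
  then have "((p 3)^2 + (p (n+2))^2) / (p 2)^2 \<le> 1" using pos by simp
  then show "(p 3 / p 2)^2 + (p (n+2) / p 2)^2 \<le> 1" by (simp add: power_divide add_divide_distrib)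
qed

lemma K_unit_bound:
  assumes p: "p \<in> Kn n" and n: "n \<ge> 2" and pos: "p 2 > 0"
  shows "\<bar>p 0 / p 2\<bar>^(2^n) + \<bar>p 1 / p 2\<bar>^(2^n) \<le> 1"
proof -
  have m: "n - 1 \<ge> 1" "n - 1 + 1 = n" using n by auto
  have a: "\<bar>p 0 / p 2\<bar>^(2^n) \<le> (p 3 / p 2)^2"
    using chain_pow_bound[OF K_norm(1)[OF p n pos] m(1)] m(2) by (simp add: numeral_3_eq_3)
  have b: "\<bar>p 1 / p 2\<bar>^(2^n) \<le> (p (n+2) / p 2)^2"
    using chain_pow_bound[OF K_norm(2)[OF p n pos] m(1)] m(2) by simp
  show ?thesis using a b K_norm(3)[OF p n pos] by linarith
qed

lemma K_young:
  assumes p: "p \<in> Kn n" and n: "n \<ge> 2" and c1: "c1 \<ge> 0" and c2: "c2 \<ge> 0"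
  shows "real (2^n) * (c1^(2^n-1) * p 0 + c2^(2^n-1) * p 1)
         \<le> (1 + (real (2^n) - 1) * (c1^(2^n) + c2^(2^n))) * p 2"
proof (cases "p 2 = 0")
  case True
  then have "p 0 = 0" "p 1 = 0" using K_abs[OF p n, of 0] K_abs[OF p n, of 1] by auto
  then show ?thesis using True by simp
next
  case False
  then have pos: "p 2 > 0" using K_bounds[OF p n] by simp
  define s where "s = p 0 / p 2"
  define t where "t = p 1 / p 2"
  define N where "N = (2::nat)^n"
  have st: "\<bar>s\<bar>^N + \<bar>t\<bar>^N \<le> 1" using K_unit_bound[OF p n pos] unfolding s_def t_def N_def .
  have ys: "real N * c1^(N-1) * \<bar>s\<bar> \<le> \<bar>s\<bar>^N + (real N - 1) * c1^N" using young c1 by simp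
  have yt: "real N * c2^(N-1) * \<bar>t\<bar> \<le> \<bar>t\<bar>^N + (real N - 1) * c2^N" using young c2 by simp
  have as: "c1^(N-1) * s \<le> c1^(N-1) * \<bar>s\<bar>" using c1 by (simp add: mult_left_mono)
  have at: "c2^(N-1) * t \<le> c2^(N-1) * \<bar>t\<bar>" using c2 by (simp add: mult_left_mono)
  have Np: "real N \<ge> 0" by simp
  have "real N * (c1^(N-1) * s + c2^(N-1) * t) \<le> real N * (c1^(N-1) * \<bar>s\<bar> + c2^(N-1) * \<bar>t\<bar>)"
    using as at Np by (simp add: mult_left_mono)
  also have "\<dots> \<le> 1 + (real N - 1) * (c1^N + c2^N)"
    using ys yt st by (simp add: algebra_simps)
  finally have key: "real N * (c1^(N-1) * s + c2^(N-1) * t) \<le> 1 + (real N - 1) * (c1^N + c2^N)" .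
  have "real N * (c1^(N-1) * p 0 + c2^(N-1) * p 1) = (real N * (c1^(N-1) * s + c2^(N-1) * t)) * p 2"
    using pos unfolding s_def t_def by (simp add: field_simps)
  also have "\<dots> \<le> (1 + (real N - 1) * (c1^N + c2^N)) * p 2"
    using key pos by (simp add: mult_right_mono)
  finally show ?thesis unfolding N_def .
qed



definition Q :: "nat \<Rightarrow> real \<Rightarrow> real \<Rightarrow> nat \<Rightarrow> real" where
  "Q n d1 d2 = (\<lambda>i.
     if i = 0 then d1
     else if i = 1 then d2
     else if i = 2 then 1
     else if 3 \<le> i \<and> i \<le> n+1 then d1^(2^(n-(i-2)))
     else if n+2 \<le> i \<and> i \<le> 2*n then d2^(2^(n-(i-(n+1))))
     else 0)"

lemma Q_y: "i \<in> {1..n-1} \<Longrightarrow> Q n d1 d2 (2+i) = d1^(2^(n-i))"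
  unfolding Q_def by auto

lemma Q_z: "i \<in> {1..n-1} \<Longrightarrow> Q n d1 d2 (n+1+i) = d2^(2^(n-i))"
  unfolding Q_def by auto

lemma Q_Rsp: "n \<ge> 1 \<Longrightarrow> Q n d1 d2 \<in> Rsp n"
  unfolding Q_def Rsp_def by auto

lemma pow2sq: "((d::real)^(2^k))^2 = d^(2^(Suc k))"
  by (simp add: power_mult[symmetric] mult.commute)

lemma chain_Q:
  assumes m: "m \<ge> 1" and y: "\<forall>i\<in>{1..m}. y i = d^(2^(m+1-i))"
  shows "chain 1 y d m"
  unfolding chain_def
proof (intro conjI ballI)
  fix i assume i: "i \<in> {1..m-1}"
  have "y (i+1) = d^(2^(m-i))" using y i by (auto simp: Suc_diff_Suc)
  moreover have "y i = d^(2^(Suc (m-i)))" using y i by (auto simp: Suc_diff_le)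
  ultimately show "(y (i+1))^2 \<le> 1 * y i" by (simp add: pow2sq)
next
  have "y m = d^2" using y m by auto
  then show "d^2 \<le> 1 * y m" by simp
qed

lemma Q_K:
  assumes n: "n \<ge> 2" and d: "d1^(2^n) + d2^(2^n) \<le> 1"
  shows "Q n d1 d2 \<in> Kn n"
proof -
  have m: "n - 1 \<ge> 1" "n - 1 + 1 = n" using n by auto
  have cy: "chain 1 (\<lambda>i. Q n d1 d2 (2+i)) d1 (n-1)"
    apply (rule chain_Q[OF m(1)]) using Q_y m(2) by simp
  have cz: "chain 1 (\<lambda>i. Q n d1 d2 (n+1+i)) d2 (n-1)"
    apply (rule chain_Q[OF m(1)]) using Q_z m(2) by simp
  have "1 \<in> {1..n-1}" using n by simp
  then have e1: "Q n d1 d2 (2+1) = d1^(2^(Suc (n-1-1)))" "Q n d1 d2 (n+1+1) = d2^(2^(Suc (n-1-1)))"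
    using Q_y[of 1 n d1 d2] Q_z[of 1 n d1 d2] n by (auto simp: Suc_diff_Suc)
  have "(Q n d1 d2 (2+1))^2 + (Q n d1 d2 (n+1+1))^2 = d1^(2^n) + d2^(2^n)"
    unfolding e1 pow2sq using n by (simp add: Suc_diff_Suc)
  then have top: "(Q n d1 d2 (2+1))^2 + (Q n d1 d2 (n+1+1))^2 \<le> (Q n d1 d2 2)^2"
    using d by (simp add: Q_def)
  have q0: "Q n d1 d2 0 = d1" "Q n d1 d2 1 = d2" "Q n d1 d2 2 = 1" by (auto simp: Q_def)
  show ?thesis unfolding Kn_iff KC_def q0 using Q_Rsp[of n] n cy cz top by (simp add: q0)
qed

lemma ip_bound:
  assumes k: "k \<in> Kn n" and n: "n \<ge> 2" and a: "\<forall>i<2*n+1. \<bar>a i\<bar> \<le> e"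
  shows "ip n a k \<le> real (2*n+1) * e * k 2"
proof -
  have "ip n a k \<le> (\<Sum>i<2*n+1. \<bar>a i\<bar> * \<bar>k i\<bar>)"
    unfolding ip_def by (intro sum_mono) (metis abs_ge_self abs_mult)
  also have "\<dots> \<le> (\<Sum>i<2*n+1. e * k 2)"
    using a K_abs[OF k n] by (intro sum_mono mult_mono) auto
  finally show ?thesis by simp
qed

lemma edist_coord:
  assumes "i < 2*n+1"
  shows "\<bar>a i - b i\<bar> \<le> edist n a b"
proof -
  have "(a i - b i)^2 \<le> (\<Sum>j<2*n+1. (a j - b j)^2)"
    using assms by (intro member_le_sum) auto
  then have "sqrt ((a i - b i)^2) \<le> edist n a b" unfolding edist_def by (rule real_sqrt_le_mono)
  then show ?thesis by simp
qed

lemma ip_vpt: "n \<ge> 1 \<Longrightarrow> ip n (vpt u1 u2) k = u1 * k 0 + u2 * k 1 - k 2"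
  unfolding vpt_dl by (subst ip_comm, subst ip_dl3) auto

lemma vpt_Rsp: "n \<ge> 2 \<Longrightarrow> vpt u1 u2 \<in> Rsp n"
  unfolding vpt_def Rsp_def by auto



lemma polarI: "t \<in> Rsp n \<Longrightarrow> (\<And>k. k \<in> Kn n \<Longrightarrow> ip n t k \<le> 0) \<Longrightarrow> t \<in> polar n (Kn n)"
  unfolding polar_def by auto

lemma normal_abs:
  assumes n: "n \<ge> 2" and wR: "w \<in> Rsp n" and hz: "\<forall>z\<in>polar n (Kn n). ip n w z \<le> 0"
  shows "\<bar>w j\<bar> \<le> w 2"
proof -
  have tj: "\<sigma> * w j - w 2 \<le> 0" if j: "j < 2*n+1" and s: "\<bar>\<sigma>\<bar> = 1" for j \<sigma>
  proof -
    define t where "t = (\<lambda>i. \<sigma> * dl j i + (-1) * dl 2 i + 0 * dl 2 i)"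
    have j2: "2 < 2*n+1" using n by simp
    have "t \<in> polar n (Kn n)"
    proof (rule polarI)
      show "t \<in> Rsp n" unfolding t_def using Rsp_dl3 j j2 by blast
      fix k assume k: "k \<in> Kn n"
      have "ip n t k = \<sigma> * k j - k 2" unfolding t_def by (subst ip_comm, subst ip_dl3) (use j j2 in auto)
      moreover have "\<sigma> * k j \<le> \<bar>k j\<bar>" using s by (metis abs_ge_self abs_mult mult_1)
      ultimately show "ip n t k \<le> 0" using K_abs[OF k n, of j] by linarith
    qed
    then have "ip n w t \<le> 0" using hz by blast
    moreover have "ip n w t = \<sigma> * w j - w 2" unfolding t_def by (subst ip_dl3) (use j j2 in auto)
    ultimately show ?thesis by simp
  qed
  have w2: "w 2 \<ge> 0" using tj[of 0 1] tj[of 0 "-1"] by simp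
  show ?thesis
  proof (cases "j < 2*n+1")
    case True then show ?thesis using tj[of j 1] tj[of j "-1"] by simp
  next
    case False then show ?thesis using wR w2 unfolding Rsp_def by auto
  qed
qed

lemma rot_ineq:
  fixes a b x y z g :: real
  assumes "a \<ge> 0" "b \<ge> 0" "x \<ge> 0" "y \<ge> 0" "g^2 \<le> 4*a*b" "x * y \<ge> z^2"
  shows "a * x + b * y + g * z \<ge> 0"
proof -
  have e: "(a*x + b*y)^2 = 4*a*b*(x*y) + (a*x - b*y)^2" by (simp add: power2_eq_square algebra_simps)
  have "(g*z)^2 = g^2 * z^2" by (simp add: power_mult_distrib)
  also have "\<dots> \<le> (4*a*b) * (x*y)" using assms by (intro mult_mono) auto
  also have "\<dots> \<le> (a*x + b*y)^2" unfolding e by simp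
  finally have "\<bar>g*z\<bar> \<le> a*x + b*y" using assms by (intro sq_le_abs) auto
  then show ?thesis by linarith
qed

lemma normal_rot:
  assumes n: "n \<ge> 2" and j: "j1 < 2*n+1" "j2 < 2*n+1"
    and Kp: "\<forall>k\<in>Kn n. k 2 * k j1 \<ge> (k j2)^2 \<and> k j1 \<ge> 0"
    and hz: "\<forall>z\<in>polar n (Kn n). ip n w z \<le> 0" and w2: "w 2 > 0"
  shows "w 2 * w j1 \<ge> (w j2)^2"
proof -
  define a where "a = (w j2)^2"
  define b where "b = (w 2)^2"
  define g where "g = - 2 * w 2 * w j2"
  have g: "g^2 \<le> 4*a*b" unfolding a_def b_def g_def by (simp add: power2_eq_square algebra_simps)
  have ab: "a \<ge> 0" "b \<ge> 0" unfolding a_def b_def by auto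
  define t where "t = (\<lambda>i. (-a) * dl 2 i + (-b) * dl j1 i + (-g) * dl j2 i)"
  have j2': "2 < 2*n+1" using n by simp
  have "t \<in> polar n (Kn n)"
  proof (rule polarI)
    show "t \<in> Rsp n" unfolding t_def using Rsp_dl3 j j2' by blast
    fix k assume k: "k \<in> Kn n"
    have "ip n t k = -(a * k 2 + b * k j1 + g * k j2)" unfolding t_def
      by (subst ip_comm, subst ip_dl3) (use j j2' in auto)
    moreover have "a * k 2 + b * k j1 + g * k j2 \<ge> 0"
      using rot_ineq[OF ab _ _ g, of "k 2" "k j1" "k j2"] Kp k K_bounds[OF k n] by auto
    ultimately show "ip n t k \<le> 0" by simp
  qed
  then have "ip n w t \<le> 0" using hz by blast
  moreover have "ip n w t = -(a * w 2 + b * w j1 + g * w j2)" unfolding t_def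
    by (subst ip_dl3) (use j j2' in auto)
  ultimately have "a * w 2 + b * w j1 + g * w j2 \<ge> 0" by simp
  then have "w 2 * (w 2 * w j1 - (w j2)^2) \<ge> 0"
    unfolding a_def b_def g_def by (simp add: power2_eq_square algebra_simps)
  then show ?thesis using w2 by (simp add: zero_le_mult_iff)
qed

lemma cs_ineq:
  fixes b c x y z :: real
  assumes "b^2 + c^2 \<le> 1" "y^2 + z^2 \<le> x^2" "x \<ge> 0"
  shows "b * y + c * z \<le> x"
proof -
  have e: "(b*y + c*z)^2 + (b*z - c*y)^2 = (b^2 + c^2) * (y^2 + z^2)" by (simp add: power2_eq_square algebra_simps)
  have "(b^2 + c^2) * (y^2 + z^2) \<le> 1 * x^2" using assms by (intro mult_mono) auto
  then have "(b*y + c*z)^2 \<le> x^2" using e zero_le_power2[of "b*z - c*y"] by linarith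
  then have "\<bar>b*y + c*z\<bar> \<le> x" using assms by (intro sq_le_abs) auto
  then show ?thesis by linarith
qed

lemma K_top: "k \<in> Kn n \<Longrightarrow> (k 3)^2 + (k (n+2))^2 \<le> (k 2)^2"
  using K_KC[of k n] unfolding KC_def by (simp add: numeral_3_eq_3)

lemma normal_lor:
  assumes n: "n \<ge> 2" and hz: "\<forall>z\<in>polar n (Kn n). ip n w z \<le> 0" and w2: "w 2 \<ge> 0"
  shows "(w 3)^2 + (w (n+2))^2 \<le> (w 2)^2"
proof (cases "(w 3)^2 + (w (n+2))^2 = 0")
  case True then show ?thesis by simp
next
  case False
  define R where "R = (w 3)^2 + (w (n+2))^2"
  have Rp: "R > 0" using False unfolding R_def by (simp add: add_pos_nonneg order_le_neq_trans)
  define r where "r = sqrt R"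
  have rp: "r > 0" unfolding r_def using Rp by simp
  have rr: "r^2 = R" unfolding r_def using Rp by simp
  define b where "b = w 3 / r"
  define c where "c = w (n+2) / r"
  have "b^2 + c^2 = R / r^2" unfolding b_def c_def R_def by (simp add: power_divide add_divide_distrib)
  then have bc: "b^2 + c^2 = 1" using rr Rp by simp
  have j: "3 < 2*n+1" "n+2 < 2*n+1" "2 < 2*n+1" using n by auto
  define t where "t = (\<lambda>i. (-1) * dl 2 i + b * dl 3 i + c * dl (n+2) i)"
  have "t \<in> polar n (Kn n)"
  proof (rule polarI)
    show "t \<in> Rsp n" unfolding t_def using Rsp_dl3 j by blast
    fix k assume k: "k \<in> Kn n"
    have "ip n t k = - k 2 + b * k 3 + c * k (n+2)" unfolding t_def
      by (subst ip_comm, subst ip_dl3) (use j in auto)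
    moreover have "b * k 3 + c * k (n+2) \<le> k 2"
      using cs_ineq[of b c "k 3" "k (n+2)" "k 2"] bc K_top[OF k] K_bounds[OF k n] by auto
    ultimately show "ip n t k \<le> 0" by simp
  qed
  then have "ip n w t \<le> 0" using hz by blast
  moreover have "ip n w t = - w 2 + b * w 3 + c * w (n+2)" unfolding t_def
    by (subst ip_dl3) (use j in auto)
  moreover have "b * w 3 + c * w (n+2) = r"
  proof -
    have "b * w 3 + c * w (n+2) = R / r" unfolding b_def c_def R_def by (simp add: power2_eq_square add_divide_distrib)
    also have "\<dots> = r" using rr rp by (simp add: power2_eq_square field_simps)
    finally show ?thesis .
  qed
  ultimately have "r \<le> w 2" by simp
  then have "r^2 \<le> (w 2)^2" using rp by (simp add: power_mono)
  then show ?thesis using rr R_def by simp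
qed



lemma normal_chain:
  assumes n: "n \<ge> 2" and off: "off + (n-1) < 2*n+1" and xi: "xi < 2*n+1"
    and Kp: "\<forall>k\<in>Kn n. chain (k 2) (\<lambda>i. k (off+i)) (k xi) (n-1) \<and> (\<forall>i\<in>{1..n-1}. k (off+i) \<ge> 0)"
    and hz: "\<forall>z\<in>polar n (Kn n). ip n w z \<le> 0" and w2: "w 2 > 0"
  shows "chain (w 2) (\<lambda>i. w (off+i)) (w xi) (n-1)"
  unfolding chain_def
proof (intro conjI ballI)
  fix i assume i: "i \<in> {1..n-1-1}"
  have "w 2 * w (off+i) \<ge> (w (off+(i+1)))^2"
  proof (rule normal_rot[OF n _ _ _ hz w2])
    show "off + i < 2*n+1" "off + (i+1) < 2*n+1" using i off by auto
    show "\<forall>k\<in>Kn n. (k (off+(i+1)))^2 \<le> k 2 * k (off+i) \<and> 0 \<le> k (off+i)"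
      using Kp i unfolding chain_def by auto
  qed
  then show "(w (off+(i+1)))^2 \<le> w 2 * w (off+i)" by simp
next
  show "(w xi)^2 \<le> w 2 * w (off+(n-1))"
  proof (rule normal_rot[OF n _ _ _ hz w2])
    show "off + (n-1) < 2*n+1" "xi < 2*n+1" using off xi by auto
    have "n - 1 \<in> {1..n-1}" using n by auto
    show "\<forall>k\<in>Kn n. (k xi)^2 \<le> k 2 * k (off+(n-1)) \<and> 0 \<le> k (off+(n-1))"
    proof (intro ballI conjI)
      fix k assume k: "k \<in> Kn n"
      have c: "chain (k 2) (\<lambda>i. k (off+i)) (k xi) (n-1)" and nn: "\<forall>i\<in>{1..n-1}. k (off+i) \<ge> 0"
        using Kp k by auto
      show "0 \<le> k (off+(n-1))" using nn \<open>n - 1 \<in> {1..n-1}\<close> by blast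
      show "(k xi)^2 \<le> k 2 * k (off+(n-1))" using c unfolding chain_def by blast
    qed
  qed
qed

lemma normal_K:
  assumes n: "n \<ge> 2" and wR: "w \<in> Rsp n" and hz: "\<forall>z\<in>polar n (Kn n). ip n w z \<le> 0" and w2: "w 2 > 0"
  shows "w \<in> Kn n"
proof -
  have top: "(w 3)^2 + (w (n+2))^2 \<le> (w 2)^2" using normal_lor[OF n hz] w2 by simp
  have cy: "chain (w 2) (\<lambda>i. w (2+i)) (w 0) (n-1)"
  proof (rule normal_chain[OF n _ _ _ hz w2])
    show "2 + (n-1) < 2*n+1" "0 < 2*n+1" using n by auto
    show "\<forall>k\<in>Kn n. chain (k 2) (\<lambda>i. k (2+i)) (k 0) (n-1) \<and> (\<forall>i\<in>{1..n-1}. k (2+i) \<ge> 0)"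
    proof (rule ballI, rule conjI)
      fix k assume k: "k \<in> Kn n"
      show "chain (k 2) (\<lambda>i. k (2+i)) (k 0) (n-1)" using K_KC[OF k] unfolding KC_def by blast
      show "\<forall>i\<in>{1..n-1}. k (2+i) \<ge> 0" using K_bounds[OF k n] by blast
    qed
  qed
  have cz: "chain (w 2) (\<lambda>i. w (n+1+i)) (w 1) (n-1)"
  proof (rule normal_chain[OF n _ _ _ hz w2])
    show "n+1 + (n-1) < 2*n+1" "1 < 2*n+1" using n by auto
    show "\<forall>k\<in>Kn n. chain (k 2) (\<lambda>i. k (n+1+i)) (k 1) (n-1) \<and> (\<forall>i\<in>{1..n-1}. k (n+1+i) \<ge> 0)"
    proof (rule ballI, rule conjI)
      fix k assume k: "k \<in> Kn n"
      show "chain (k 2) (\<lambda>i. k (n+1+i)) (k 1) (n-1)" using K_KC[OF k] unfolding KC_def by blast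
      show "\<forall>i\<in>{1..n-1}. k (n+1+i) \<ge> 0" using K_bounds[OF k n] by blast
    qed
  qed
  have top': "(w (2+1))^2 + (w (n+1+1))^2 \<le> (w 2)^2" using top by (simp add: numeral_3_eq_3)
  have "KC n (w 0) (w 1) (w 2) (\<lambda>i. w (2+i)) (\<lambda>i. w (n+1+i))"
    unfolding KC_def using top' cy cz w2 by simp
  then show ?thesis unfolding Kn_iff using wR by blast
qed

lemma chain_uniq:
  assumes ch: "chain 1 y x m" and m: "m \<ge> 1" and c: "c \<ge> 0" and x: "x = c"
    and y1: "y 1 = c^(2^m)" and ynn: "\<forall>i\<in>{1..m}. y i \<ge> 0"
  shows "\<forall>j\<in>{1..m}. y j = c^(2^(m+1-j))"
proof
  fix j assume j: "j \<in> {1..m}"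
  have lo: "x^(2^m) \<le> (y j)^(2^(j-1))" using chain1_low[OF ch m] j by blast
  have hi: "(y j)^(2^(j-1)) \<le> y 1" using chain1_mono[OF ch m] j by blast
  have eq: "(y j)^(2^(j-1)) = c^(2^m)" using lo hi x y1 by simp
  have mj: "m+1-j + (j-1) = m" using j by auto
  have "(2::nat)^(m+1-j) * 2^(j-1) = 2^m" unfolding power_add[symmetric] mj ..
  then have "(c^(2^(m+1-j)))^(2^(j-1)) = c^(2^m)" by (metis power_mult)
  then have "(y j)^(2^(j-1)) = (c^(2^(m+1-j)))^(2^(j-1))" using eq by simp
  then show "y j = c^(2^(m+1-j))"
  proof (rule power_eq_imp_eq_base)
    show "0 \<le> y j" using ynn j by blast
    show "0 \<le> c^(2^(m+1-j))" using c by simp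
    show "0 < (2::nat)^(j-1)" by simp
  qed
qed



lemma uniq:
  assumes n: "n \<ge> 2" and c1: "c1 \<ge> 0" and c2: "c2 \<ge> 0" and S: "c1^(2^n) + c2^(2^n) = 1"
    and w: "w \<in> Kn n" and w2: "w 2 > 0"
    and hv: "c1^(2^n-1) * w 0 + c2^(2^n-1) * w 1 = w 2"
  shows "w = (\<lambda>i. w 2 * Q n c1 c2 i)"
proof -
  define N where "N = (2::nat)^n"
  have "(2::nat)^n \<ge> 2^2" using n by (intro power_increasing) auto
  then have N2: "N \<ge> 2" unfolding N_def by simp
  define s where "s = w 0 / w 2"
  define t where "t = w 1 / w 2"
  have hst: "c1^(N-1) * s + c2^(N-1) * t = 1"
  proof -
    have "c1^(N-1) * s + c2^(N-1) * t = (c1^(N-1) * w 0 + c2^(N-1) * w 1) / w 2"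
      unfolding s_def t_def by (simp add: add_divide_distrib)
    also have "\<dots> = 1" using hv w2 unfolding N_def by simp
    finally show ?thesis .
  qed
  have st: "\<bar>s\<bar>^N + \<bar>t\<bar>^N \<le> 1" using K_unit_bound[OF w n w2] unfolding s_def t_def N_def .
  have ys: "real N * c1^(N-1) * \<bar>s\<bar> \<le> \<bar>s\<bar>^N + (real N - 1) * c1^N" using young c1 by simp
  have yt: "real N * c2^(N-1) * \<bar>t\<bar> \<le> \<bar>t\<bar>^N + (real N - 1) * c2^N" using young c2 by simp
  have as: "real N * c1^(N-1) * s \<le> real N * c1^(N-1) * \<bar>s\<bar>" using c1 by (simp add: mult_left_mono)
  have at: "real N * c2^(N-1) * t \<le> real N * c2^(N-1) * \<bar>t\<bar>" using c2 by (simp add: mult_left_mono)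
  have hN: "real N * c1^(N-1) * s + real N * c2^(N-1) * t = real N"
    using hst by (metis distrib_left mult.assoc mult.right_neutral)
  have S': "c1^N + c2^N = 1" using S unfolding N_def .
  have SN: "(real N - 1) * c1^N + (real N - 1) * c2^N = real N - 1"
    by (simp add: S' distrib_left[symmetric])
  have eq1: "real N * c1^(N-1) * \<bar>s\<bar> = \<bar>s\<bar>^N + (real N - 1) * c1^N" using ys yt as at hN SN st by linarith
  have eq2: "real N * c2^(N-1) * \<bar>t\<bar> = \<bar>t\<bar>^N + (real N - 1) * c2^N" using ys yt as at hN SN st by linarith
  have sst: "\<bar>s\<bar>^N + \<bar>t\<bar>^N = 1" using ys yt as at hN SN st by linarith
  have es: "real N * c1^(N-1) * s = real N * c1^(N-1) * \<bar>s\<bar>" using ys yt as at hN SN st by linarith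
  have et: "real N * c2^(N-1) * t = real N * c2^(N-1) * \<bar>t\<bar>" using ys yt as at hN SN st by linarith
  have abs_s: "\<bar>s\<bar> = c1" using young_eq[OF c1 _ N2 eq1] by simp
  have abs_t: "\<bar>t\<bar> = c2" using young_eq[OF c2 _ N2 eq2] by simp
  have s_eq: "s = c1"
  proof (cases "c1 = 0")
    case True then show ?thesis using abs_s by simp
  next
    case False
    then have "real N * c1^(N-1) > 0" using c1 N2 by simp
    then have "s = \<bar>s\<bar>" using es False N2 by auto
    then show ?thesis using abs_s by simp
  qed
  have t_eq: "t = c2"
  proof (cases "c2 = 0")
    case True then show ?thesis using abs_t by simp
  next
    case False
    then have "real N * c2^(N-1) > 0" using c2 N2 by simp
    then have "t = \<bar>t\<bar>" using et False N2 by auto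
    then show ?thesis using abs_t by simp
  qed
  have m: "n - 1 \<ge> 1" "n - 1 + 1 = n" using n by auto
  note chy = K_norm(1)[OF w n w2] and chz = K_norm(2)[OF w n w2] and tp = K_norm(3)[OF w n w2]
  have a: "\<bar>s\<bar>^N \<le> (w 3 / w 2)^2"
    using chain_pow_bound[OF chy m(1)] m(2) unfolding s_def N_def by (simp add: numeral_3_eq_3)
  have b: "\<bar>t\<bar>^N \<le> (w (n+2) / w 2)^2"
    using chain_pow_bound[OF chz m(1)] m(2) unfolding t_def N_def by simp
  have y1sq: "(w 3 / w 2)^2 = c1^N" proof -
    have "\<bar>s\<bar>^N = c1^N" using abs_s by simp
    then show ?thesis using a b tp sst by linarith
  qed
  have z1sq: "(w (n+2) / w 2)^2 = c2^N" proof -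
    have "\<bar>t\<bar>^N = c2^N" using abs_t by simp
    then show ?thesis using a b tp sst by linarith
  qed
  note kb = K_bounds[OF w n]
  have ynn: "\<forall>i\<in>{1..n-1}. w (2+i) / w 2 \<ge> 0" using kb w2 by auto
  have znn: "\<forall>i\<in>{1..n-1}. w (n+1+i) / w 2 \<ge> 0" using kb w2 by auto
  have one: "1 \<in> {1..n-1}" using n by auto
  have pN: "(c^(2^(n-1)))^2 = c^N" for c :: real
    unfolding pow2sq N_def using m by (metis Suc_eq_plus1)
  have y1: "w (2+1) / w 2 = c1^(2^(n-1))"
  proof (rule power_eq_imp_eq_base[of _ 2])
    show "(w (2+1) / w 2)^2 = (c1^(2^(n-1)))^2" using y1sq pN by (simp add: numeral_3_eq_3)
  next
    show "0 \<le> w (2+1) / w 2" using ynn one by blast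
  qed (use c1 in auto)
  have z1: "w (n+1+1) / w 2 = c2^(2^(n-1))"
  proof (rule power_eq_imp_eq_base[of _ 2])
    show "(w (n+1+1) / w 2)^2 = (c2^(2^(n-1)))^2" using z1sq pN by simp
  next
    show "0 \<le> w (n+1+1) / w 2" using znn one by blast
  qed (use c2 in auto)
  have yall: "\<forall>j\<in>{1..n-1}. w (2+j) / w 2 = c1^(2^(n-1+1-j))"
    using chain_uniq[OF chy m(1) c1 _ _ ynn] s_eq y1 unfolding s_def by simp
  have zall: "\<forall>j\<in>{1..n-1}. w (n+1+j) / w 2 = c2^(2^(n-1+1-j))"
    using chain_uniq[OF chz m(1) c2 _ _ znn] t_eq z1 unfolding t_def by simp
  have wR: "w \<in> Rsp n" using K_Rsp[OF w] .
  show ?thesis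
  proof
    fix i
    consider "i = 0" | "i = 1" | "i = 2" | "3 \<le> i \<and> i \<le> n+1" | "n+2 \<le> i \<and> i \<le> 2*n" | "i \<ge> 2*n+1"
      by linarith
    then show "w i = w 2 * Q n c1 c2 i"
    proof cases
      case 1 then show ?thesis using s_eq w2 unfolding s_def by (simp add: Q_def field_simps)
    next
      case 2 then show ?thesis using t_eq w2 unfolding t_def by (simp add: Q_def field_simps)
    next
      case 3 then show ?thesis by (simp add: Q_def)
    next
      case 4
      then have j: "i - 2 \<in> {1..n-1}" and ij: "2 + (i - 2) = i" by auto
      have "w (2 + (i-2)) / w 2 = c1^(2^(n-(i-2)))" using yall j m(2) by simp
      moreover have "Q n c1 c2 (2 + (i-2)) = c1^(2^(n-(i-2)))" using Q_y j by blast
      ultimately show ?thesis unfolding ij using w2 by (simp add: field_simps)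
    next
      case 5
      then have j: "i - (n+1) \<in> {1..n-1}" and ij: "n + 1 + (i - (n+1)) = i" by auto
      have "w (n+1 + (i-(n+1))) / w 2 = c2^(2^(n-(i-(n+1))))" using zall j m(2) by simp
      moreover have "Q n c1 c2 (n+1 + (i-(n+1))) = c2^(2^(n-(i-(n+1))))" using Q_z j by blast
      ultimately show ?thesis unfolding ij using w2 by (simp add: field_simps)
    next
      case 6
      then have "w i = 0" using wR unfolding Rsp_def by auto
      moreover have "Q n c1 c2 i = 0" using 6 Q_Rsp[of n c1 c2] n unfolding Rsp_def by auto
      ultimately show ?thesis by simp
    qed
  qed
qed



lemma pm: "N > 0 \<Longrightarrow> (c::real)^(N-1) * c = c^N"
  by (cases N) (auto simp: mult.commute)

lemma main_c:
  fixes n :: nat and c1 c2 :: real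
  assumes n: "n \<ge> 2" and c1: "c1 \<ge> 0" and c2: "c2 \<ge> 0"
    and bd: "vpt (c1^(2^n-1)) (c2^(2^n-1)) \<in> bdry n (polar n (Kn n))"
  shows "normal_cone n (polar n (Kn n)) (vpt (c1^(2^n-1)) (c2^(2^n-1)))
           = {(\<lambda>i. \<alpha> * Q n c1 c2 i) | \<alpha>. \<alpha> \<ge> 0}"
proof -
  define N where "N = (2::nat)^n"
  have "(2::nat)^n \<ge> 2^2" using n by (intro power_increasing) auto
  then have N2: "N \<ge> 2" unfolding N_def by simp
  define u1 where "u1 = c1^(N-1)"
  define u2 where "u2 = c2^(N-1)"
  define v where "v = vpt u1 u2"
  define P where "P = polar n (Kn n)"
  define S where "S = c1^N + c2^N"
  have bd': "v \<in> bdry n P" using bd unfolding v_def P_def u1_def u2_def N_def .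
  have ipv: "\<And>k. ip n v k = u1 * k 0 + u2 * k 1 - k 2" using ip_vpt n unfolding v_def by simp
  have vR: "v \<in> Rsp n" using vpt_Rsp n unfolding v_def by simp
  have u1n: "u1 \<ge> 0" "u2 \<ge> 0" unfolding u1_def u2_def using c1 c2 by auto
  have Kyo: "real N * (u1 * k 0 + u2 * k 1) \<le> (1 + (real N - 1) * S) * k 2" if k: "k \<in> Kn n" for k
    using K_young[OF k n c1 c2] unfolding u1_def u2_def S_def N_def .
  have vP: "v \<in> P"
    unfolding P_def
  proof (rule polarI[OF vR])
    fix k assume k: "k \<in> Kn n"
    have k2: "k 2 \<ge> 0" using K_bounds[OF k n] by simp
    show "ip n v k \<le> 0"
    proof (rule field_le_epsilon)
      fix e :: real assume e: "e > 0"
      define e' where "e' = e / (real (2*n+1) * (k 2 + 1))"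
      have e'p: "e' > 0" unfolding e'_def using e k2 by simp
      obtain y where y: "y \<in> P" "edist n v y < e'" using bd' e'p unfolding bdry_def by blast
      have yk: "ip n y k \<le> 0" using y(1) k unfolding P_def polar_def by auto
      have diff: "ip n (\<lambda>i. v i - y i) k = ip n v k - ip n y k"
        using ip_diff[of n k v y] ip_comm by metis
      have co: "\<forall>i<2*n+1. \<bar>v i - y i\<bar> \<le> e'" using edist_coord y(2) by (meson less_imp_le order_trans)
      have bnd: "ip n (\<lambda>i. v i - y i) k \<le> real (2*n+1) * e' * k 2"
        using ip_bound[OF k n co] .
      have "real (2*n+1) * e' * k 2 = e * (k 2 / (k 2 + 1))"
      proof -
        have a: "real (2*n+1) > 0" "k 2 + 1 > 0" using k2 by auto
        have "real (2*n+1) * e' = e / (k 2 + 1)" unfolding e'_def using a by (simp add: divide_divide_eq_left')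
        then show ?thesis by simp
      qed
      also have "\<dots> \<le> e * 1" using e k2 by (intro mult_left_mono) auto
      finally show "ip n v k \<le> 0 + e" using diff bnd yk by linarith
    qed
  qed
  have S1: "S \<le> 1"
  proof (rule ccontr)
    assume "\<not> S \<le> 1"
    then have Sg: "S > 1" by simp
    define \<sigma> where "\<sigma> = root N S"
    have Np: "N > 0" using N2 by simp
    have \<sigma>N: "\<sigma>^N = S" unfolding \<sigma>_def using Np Sg by (simp add: real_root_pow_pos2)
    have \<sigma>g: "\<sigma> > 1" unfolding \<sigma>_def using Np Sg by (simp add: real_root_gt_1_iff)
    define d1 where "d1 = c1 / \<sigma>"
    define d2 where "d2 = c2 / \<sigma>"
    have dd: "d1^N + d2^N = 1"
      unfolding d1_def d2_def using \<sigma>N Sg unfolding S_def by (simp add: power_divide add_divide_distrib[symmetric])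
    have QK: "Q n d1 d2 \<in> Kn n" using Q_K[OF n] dd unfolding N_def by simp
    have "ip n v (Q n d1 d2) \<le> 0" using vP QK unfolding P_def polar_def by auto
    moreover have "ip n v (Q n d1 d2) = u1 * d1 + u2 * d2 - 1" unfolding ipv by (simp add: Q_def)
    moreover have "u1 * d1 + u2 * d2 = S / \<sigma>"
    proof -
      have "u1 * c1 = c1^N" "u2 * c2 = c2^N" unfolding u1_def u2_def using pm[OF Np] by auto
      then show ?thesis unfolding d1_def d2_def S_def by (simp add: add_divide_distrib)
    qed
    moreover have "S / \<sigma> > 1"
    proof -
      have "\<sigma>^(N-1) > 1" using \<sigma>g N2 by (intro one_less_power) auto
      then have A: "\<sigma> * \<sigma>^(N-1) > \<sigma>" using \<sigma>g by simp
      have B: "\<sigma> * \<sigma>^(N-1) = S" using \<sigma>N Np pm[of N \<sigma>] by (simp add: mult.commute)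
      have "S > \<sigma>" using A B by linarith
      then show ?thesis using \<sigma>g by simp
    qed
    ultimately show False by simp
  qed
  have S2: "S \<ge> 1"
  proof (rule ccontr)
    assume "\<not> 1 \<le> S"
    then have Sl: "S < 1" by simp
    define \<theta> where "\<theta> = (1 + (real N - 1) * S) / real N"
    have Npos: "real N > 0" using N2 by simp
    have \<theta>: "\<theta> < 1"
    proof -
      have "(real N - 1) * S < (real N - 1) * 1" using Sl N2 by (intro mult_strict_left_mono) auto
      then show ?thesis unfolding \<theta>_def using Npos by (simp add: field_simps)
    qed
    define e where "e = (1 - \<theta>) / real (2*n+1)"
    have ep: "e > 0" unfolding e_def using \<theta> by simp
    obtain y where y: "y \<in> Rsp n - P" "edist n v y < e" using bd' ep unfolding bdry_def by blast
    have "y \<in> P" unfolding P_def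
    proof (rule polarI)
      show "y \<in> Rsp n" using y(1) by simp
      fix k assume k: "k \<in> Kn n"
      have k2: "k 2 \<ge> 0" using K_bounds[OF k n] by simp
      have diff: "ip n (\<lambda>i. y i - v i) k = ip n y k - ip n v k"
        using ip_diff[of n k y v] ip_comm by metis
      have co: "\<forall>i<2*n+1. \<bar>y i - v i\<bar> \<le> e"
        using edist_coord y(2) by (metis abs_minus_commute less_imp_le order_trans)
      have bnd: "ip n (\<lambda>i. y i - v i) k \<le> real (2*n+1) * e * k 2" using ip_bound[OF k n co] .
      have be: "real (2*n+1) * e * k 2 = (1 - \<theta>) * k 2" unfolding e_def by simp
      have "u1 * k 0 + u2 * k 1 \<le> \<theta> * k 2"
        using Kyo[OF k] Npos unfolding \<theta>_def by (simp add: field_simps)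
      then have "ip n v k \<le> \<theta> * k 2 - k 2" using ipv by simp
      then show "ip n y k \<le> 0" using diff bnd be by (simp add: algebra_simps)
    qed
    then show False using y(1) by simp
  qed
  have S': "c1^N + c2^N = 1" using S1 S2 unfolding S_def by simp
  have QK: "Q n c1 c2 \<in> Kn n" using Q_K[OF n] S' unfolding N_def by simp
  have ipQ: "ip n v (Q n c1 c2) = 0"
  proof -
    have Np: "N > 0" using N2 by simp
    have "u1 * c1 = c1^N" "u2 * c2 = c2^N" unfolding u1_def u2_def using pm[OF Np] by auto
    then show ?thesis unfolding ipv using S' by (simp add: Q_def)
  qed
  have "normal_cone n P v = {(\<lambda>i. \<alpha> * Q n c1 c2 i) | \<alpha>. \<alpha> \<ge> 0}"
  proof
    show "{(\<lambda>i. \<alpha> * Q n c1 c2 i) | \<alpha>. \<alpha> \<ge> 0} \<subseteq> normal_cone n P v"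
    proof
      fix x assume "x \<in> {(\<lambda>i. \<alpha> * Q n c1 c2 i) | \<alpha>. \<alpha> \<ge> 0}"
      then obtain \<alpha> where a: "\<alpha> \<ge> 0" and x: "x = (\<lambda>i. \<alpha> * Q n c1 c2 i)" by blast
      have xR: "x \<in> Rsp n" using Q_Rsp[of n c1 c2] n unfolding x Rsp_def by auto
      have "ip n x (\<lambda>i. z i - v i) \<le> 0" if z: "z \<in> P" for z
      proof -
        have "ip n x (\<lambda>i. z i - v i) = \<alpha> * (ip n z (Q n c1 c2) - ip n v (Q n c1 c2))"
          unfolding x ip_scale ip_diff by (simp add: ip_comm)
        moreover have "ip n z (Q n c1 c2) \<le> 0" using z QK unfolding P_def polar_def by auto
        ultimately show ?thesis using ipQ a by (simp add: mult_nonneg_nonpos)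
      qed
      then show "x \<in> normal_cone n P v" unfolding normal_cone_def using xR by auto
    qed
  next
    show "normal_cone n P v \<subseteq> {(\<lambda>i. \<alpha> * Q n c1 c2 i) | \<alpha>. \<alpha> \<ge> 0}"
    proof
      fix w assume "w \<in> normal_cone n P v"
      then have wR: "w \<in> Rsp n" and hw: "\<forall>z\<in>P. ip n w (\<lambda>i. z i - v i) \<le> 0"
        unfolding normal_cone_def by auto
      have zP: "(\<lambda>i. 0) \<in> P" unfolding P_def by (rule polarI) (auto simp: Rsp_def ip_def)
      have vvP: "(\<lambda>i. 2 * v i) \<in> P" unfolding P_def
      proof (rule polarI)
        show "(\<lambda>i. 2 * v i) \<in> Rsp n" using vR unfolding Rsp_def by auto
        fix k assume "k \<in> Kn n"
        then have "ip n v k \<le> 0" using vP unfolding P_def polar_def by auto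
        then show "ip n (\<lambda>i. 2 * v i) k \<le> 0" unfolding ip_scale by simp
      qed
      have w0: "ip n w (\<lambda>i. 0) = 0" unfolding ip_def by simp
      have h1: "ip n w (\<lambda>i. 0 - v i) \<le> 0" using hw[rule_format, OF zP] by simp
      have h2: "ip n w (\<lambda>i. 2 * v i - v i) \<le> 0" using hw[rule_format, OF vvP] by simp
      have "ip n w (\<lambda>i. 0 - v i) = - ip n w v" using ip_diff[of n w "\<lambda>i. 0" v] w0 by simp
      moreover have "ip n w (\<lambda>i. 2 * v i - v i) = ip n w v" by (simp add: algebra_simps)
      ultimately have wv: "ip n w v = 0" using h1 h2 by simp
      have hz: "\<forall>z\<in>polar n (Kn n). ip n w z \<le> 0"
      proof
        fix z assume "z \<in> polar n (Kn n)"
        then have zP': "z \<in> P" unfolding P_def .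
        have "ip n w (\<lambda>i. z i - v i) \<le> 0" using hw[rule_format, OF zP'] .
        then show "ip n w z \<le> 0" unfolding ip_diff wv by simp
      qed
      have wab: "\<And>j. \<bar>w j\<bar> \<le> w 2" using normal_abs[OF n wR hz] .
      show "w \<in> {(\<lambda>i. \<alpha> * Q n c1 c2 i) | \<alpha>. \<alpha> \<ge> 0}"
      proof (cases "w 2 = 0")
        case True
        have "w = (\<lambda>i. 0 * Q n c1 c2 i)"
        proof (rule ext)
          fix i have "\<bar>w i\<bar> \<le> 0" using wab[of i] True by simp
          then show "w i = 0 * Q n c1 c2 i" by simp
        qed
        then show ?thesis by (intro CollectI exI[where x=0]) simp
      next
        case False
        then have w2: "w 2 > 0" using wab[of 2] by simp
        have wK: "w \<in> Kn n" using normal_K[OF n wR hz w2] .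
        have hv: "c1^(2^n-1) * w 0 + c2^(2^n-1) * w 1 = w 2"
          using wv unfolding ip_comm[of n w v] ipv u1_def u2_def N_def by simp
        have "w = (\<lambda>i. w 2 * Q n c1 c2 i)"
          using uniq[OF n c1 c2 _ wK w2 hv] S' unfolding N_def by simp
        then show ?thesis using w2 by (intro CollectI exI[where x="w 2"]) simp
      qed
    qed
  qed
  then show ?thesis unfolding P_def v_def u1_def u2_def N_def .
qed



lemma cpow:
  fixes u :: real
  assumes u: "u \<ge> 0" and n: "n \<ge> 1"
  shows "(u powr (1 / (2^n - 1)))^(2^n - 1) = u"
proof (cases "u = 0")
  case True
  have "(2::nat)^n \<ge> 2^1" using n by (intro power_increasing) auto
  then have "(2::nat)^n - 1 > 0" by simp
  then show ?thesis using True by simp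
next
  case False
  have n2: "(2::nat)^n \<ge> 1" by simp
  have r: "real ((2::nat)^n - 1) = 2^n - 1" using n2 by (simp add: of_nat_diff)
  have nz: "(2::real)^n - 1 \<noteq> 0"
  proof -
    have "(2::real)^n \<ge> 2^1" using n by (intro power_increasing) auto
    then show ?thesis by simp
  qed
  have "(u powr (1 / (2^n - 1)))^(2^n - 1) = u powr (real (2^n - 1) * (1 / (2^n - 1)))"
    using False by (simp add: powr_power)
  also have "\<dots> = u powr 1" unfolding r using nz by simp
  also have "\<dots> = u" using u by simp
  finally show ?thesis .
qed

lemma pw:
  fixes u :: real
  assumes u: "u \<ge> 0" and n: "n \<ge> 1" and j: "j \<le> n"
  shows "u powr (lam n / 2^j) = (u powr (1 / (2^n - 1)))^(2^(n-j))"
proof (cases "u = 0")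
  case True then show ?thesis by simp
next
  case False
  have nz: "(2::real)^n - 1 \<noteq> 0"
  proof -
    have "(2::real)^n \<ge> 2^1" using n by (intro power_increasing) auto
    then show ?thesis by simp
  qed
  have "(u powr (1 / (2^n - 1)))^(2^(n-j)) = u powr (real (2^(n-j)) * (1 / (2^n - 1)))"
    using False by (simp add: powr_power)
  moreover have "real (2^(n-j)) * (1 / (2^n - 1)) = lam n / 2^j"
  proof -
    have "(2::real)^(n-j) = 2^n / 2^j" using j by (simp add: power_diff)
    then show ?thesis unfolding lam_def by simp
  qed
  ultimately show ?thesis by simp
qed

lemma wpt_Q:
  assumes u1: "u1 \<ge> 0" and u2: "u2 \<ge> 0" and n: "n \<ge> 2"
  shows "wpt n u1 u2 = Q n (u1 powr (1 / (2^n - 1))) (u2 powr (1 / (2^n - 1)))"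
proof
  fix i
  have n1: "n \<ge> 1" using n by simp
  consider "i = 0" | "i = 1" | "i = 2" | "3 \<le> i \<and> i \<le> n+1" | "n+2 \<le> i \<and> i \<le> 2*n" | "i \<ge> 2*n+1"
    by linarith
  then show "wpt n u1 u2 i = Q n (u1 powr (1 / (2^n - 1))) (u2 powr (1 / (2^n - 1))) i"
  proof cases
    case 1 then show ?thesis unfolding wpt_def Q_def using pw[OF u1 n1, of n] by simp
  next
    case 2 then show ?thesis unfolding wpt_def Q_def using pw[OF u2 n1, of n] by simp
  next
    case 3 then show ?thesis unfolding wpt_def Q_def by simp
  next
    case 4
    then have "i - 2 \<le> n" by auto
    then show ?thesis unfolding wpt_def Q_def using pw[OF u1 n1 \<open>i - 2 \<le> n\<close>] 4 by simp
  next
    case 5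
    then have "i - (n+1) \<le> n" by auto
    then show ?thesis unfolding wpt_def Q_def using pw[OF u2 n1 \<open>i - (n+1) \<le> n\<close>] 5 by simp
  next
    case 6
    then have "i \<noteq> 0" "i \<noteq> 1" "i \<noteq> 2" "\<not> (3 \<le> i \<and> i \<le> n+1)" "\<not> (n+2 \<le> i \<and> i \<le> 2*n)" using n by auto
    then show ?thesis unfolding wpt_def Q_def by simp
  qed
qed

theorem lemma3:
  fixes n :: nat and u1 u2 :: real
  assumes "n \<ge> 2" and "u1 \<ge> 0" and "u2 \<ge> 0"
    and "vpt u1 u2 \<in> bdry n (polar n (Kn n))"
  shows "normal_cone n (polar n (Kn n)) (vpt u1 u2)
           = {(\<lambda>i. \<alpha> * wpt n u1 u2 i) | \<alpha>. \<alpha> \<ge> 0}"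
proof -
  define c1 where "c1 = u1 powr (1 / (2^n - 1))"
  define c2 where "c2 = u2 powr (1 / (2^n - 1))"
  have n1: "n \<ge> 1" using assms(1) by simp
  have e1: "c1^(2^n - 1) = u1" unfolding c1_def using cpow[OF assms(2) n1] .
  have e2: "c2^(2^n - 1) = u2" unfolding c2_def using cpow[OF assms(3) n1] .
  have c: "c1 \<ge> 0" "c2 \<ge> 0" unfolding c1_def c2_def by auto
  have W: "wpt n u1 u2 = Q n c1 c2" unfolding c1_def c2_def using wpt_Q assms(1-3) by blast
  have bd: "vpt (c1^(2^n-1)) (c2^(2^n-1)) \<in> bdry n (polar n (Kn n))" unfolding e1 e2 using assms(4) .
  show ?thesis using main_c[OF assms(1) c bd] unfolding e1 e2 W .
qed


end
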